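(* Let $\Phi$ be an irreducible root system of classical type ($A_r$, $B_r$, $C_r$ or $D_r$) with base $\{\alpha_1,\dots,\alpha_r\}$. For every $1\le i\le r$, the root subsystem $\Phi\cap\mathbb Z\{\alpha_k:k\neq i\}$ generated by the simple roots other than $\alpha_i$ is a good root subsystem of $\Phi$; conversely, every good root subsystem of $\Phi$ is $W$-conjugate to one of these.
   Context: $W$ is the Weyl group of $\Phi$, and $\mathbb Z\{\cdot\}$ denotes the integral span. A root subsystem $\Psi\subseteq\Phi$ is closed if $\lambda,\mu\in\Psi$, $\lambda+\mu\in\Phi$ imply $\lambda+\mu\in\Psi$; $\operatorname{rk}\Psi=\dim\operatorname{Span}\Psi$. A good root subsystem of $\Phi$ (rank $r$) is a closed root subsystem of rank $r-1$ maximal under inclusion among closed root subsystems of rank $r-1$. *)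

theory Defs
  imports "HOL-Analysis.Analysis"
begin

definition rrefl :: "'a::euclidean_space \<Rightarrow> 'a \<Rightarrow> 'a" where
  "rrefl a v = v - ((2 * (v \<bullet> a)) / (a \<bullet> a)) *\<^sub>R a"

definition cartan_int :: "'a::euclidean_space \<Rightarrow> 'a \<Rightarrow> real" where
  "cartan_int u v = (2 * (u \<bullet> v)) / (v \<bullet> v)"

text \<open>A (reduced, crystallographic) root system; it spans the subspace \<open>span \<Phi>\<close>.\<close>
definition root_system :: "'a::euclidean_space set \<Rightarrow> bool" where
  "root_system \<Phi> \<longleftrightarrow> finite \<Phi> \<and> 0 \<notin> \<Phi>
     \<and> (\<forall>a\<in>\<Phi>. \<forall>b\<in>\<Phi>. rrefl a b \<in> \<Phi>)
     \<and> (\<forall>a\<in>\<Phi>. \<forall>b\<in>\<Phi>. cartan_int b a \<in> \<int>)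
     \<and> (\<forall>a\<in>\<Phi>. \<forall>c::real. c *\<^sub>R a \<in> \<Phi> \<longrightarrow> c = 1 \<or> c = -1)"

definition rank :: "'a::euclidean_space set \<Rightarrow> nat" where
  "rank S = dim (span S)"

inductive_set weyl_group :: "'a::euclidean_space set \<Rightarrow> ('a \<Rightarrow> 'a) set" for \<Phi> where
  weyl_id: "id \<in> weyl_group \<Phi>"
| weyl_step: "w \<in> weyl_group \<Phi> \<Longrightarrow> a \<in> \<Phi> \<Longrightarrow> rrefl a \<circ> w \<in> weyl_group \<Phi>"

definition int_span :: "'a::euclidean_space set \<Rightarrow> 'a set" where
  "int_span S = {\<Sum>v\<in>T. real_of_int (c v) *\<^sub>R v | T c. finite T \<and> T \<subseteq> S}"

definition is_base :: "'a::euclidean_space set \<Rightarrow> nat \<Rightarrow> (nat \<Rightarrow> 'a) \<Rightarrow> bool" where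
  "is_base \<Phi> r \<alpha> \<longleftrightarrow> (\<forall>i\<in>{1..r}. \<alpha> i \<in> \<Phi>) \<and> inj_on \<alpha> {1..r}
     \<and> independent (\<alpha> ` {1..r})
     \<and> (\<forall>b\<in>\<Phi>. \<exists>c::nat \<Rightarrow> int. b = (\<Sum>i=1..r. real_of_int (c i) *\<^sub>R \<alpha> i)
            \<and> ((\<forall>i\<in>{1..r}. c i \<ge> 0) \<or> (\<forall>i\<in>{1..r}. c i \<le> 0)))"

text \<open>Cartan matrices (entry (i,j) = \<open>2(\<alpha>_i,\<alpha>_j)/(\<alpha>_j,\<alpha>_j)\<close>), Bourbaki numbering.\<close>
definition cartan_A :: "nat \<Rightarrow> nat \<Rightarrow> nat \<Rightarrow> real" where
  "cartan_A r i j = (if i = j then 2 else if i + 1 = j \<or> j + 1 = i then -1 else 0)"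

definition cartan_B :: "nat \<Rightarrow> nat \<Rightarrow> nat \<Rightarrow> real" where
  "cartan_B r i j = (if i = j then 2 else if i = r - 1 \<and> j = r then -2
     else if i + 1 = j \<or> j + 1 = i then -1 else 0)"

definition cartan_C :: "nat \<Rightarrow> nat \<Rightarrow> nat \<Rightarrow> real" where
  "cartan_C r i j = (if i = j then 2 else if i = r \<and> j = r - 1 then -2
     else if i + 1 = j \<or> j + 1 = i then -1 else 0)"

definition cartan_D :: "nat \<Rightarrow> nat \<Rightarrow> nat \<Rightarrow> real" where
  "cartan_D r i j = (if i = j then 2
     else if {i, j} = {r - 2, r} then -1
     else if {i, j} = {r - 1, r} then 0
     else if i + 1 = j \<or> j + 1 = i then -1 else 0)"

definition has_cartan :: "nat \<Rightarrow> (nat \<Rightarrow> 'a::euclidean_space) \<Rightarrow> (nat \<Rightarrow> nat \<Rightarrow> real) \<Rightarrow> bool" where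
  "has_cartan r \<alpha> M \<longleftrightarrow> (\<forall>i\<in>{1..r}. \<forall>j\<in>{1..r}. cartan_int (\<alpha> i) (\<alpha> j) = M i j)"

definition classical_type :: "nat \<Rightarrow> (nat \<Rightarrow> 'a::euclidean_space) \<Rightarrow> bool" where
  "classical_type r \<alpha> \<longleftrightarrow>
     (r \<ge> 1 \<and> has_cartan r \<alpha> (cartan_A r)) \<or>
     (r \<ge> 2 \<and> has_cartan r \<alpha> (cartan_B r)) \<or>
     (r \<ge> 3 \<and> has_cartan r \<alpha> (cartan_C r)) \<or>
     (r \<ge> 4 \<and> has_cartan r \<alpha> (cartan_D r))"

definition root_subsystem :: "'a::euclidean_space set \<Rightarrow> 'a set \<Rightarrow> bool" where
  "root_subsystem \<Phi> \<Psi> \<longleftrightarrow> \<Psi> \<subseteq> \<Phi> \<and> root_system \<Psi>"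

definition closed_subsystem :: "'a::euclidean_space set \<Rightarrow> 'a set \<Rightarrow> bool" where
  "closed_subsystem \<Phi> \<Psi> \<longleftrightarrow> root_subsystem \<Phi> \<Psi>
     \<and> (\<forall>l\<in>\<Psi>. \<forall>m\<in>\<Psi>. l + m \<in> \<Phi> \<longrightarrow> l + m \<in> \<Psi>)"

definition good_subsystem :: "'a::euclidean_space set \<Rightarrow> 'a set \<Rightarrow> bool" where
  "good_subsystem \<Phi> \<Psi> \<longleftrightarrow> closed_subsystem \<Phi> \<Psi> \<and> rank \<Psi> = rank \<Phi> - 1
     \<and> (\<forall>\<Psi>'. closed_subsystem \<Phi> \<Psi>' \<and> rank \<Psi>' = rank \<Phi> - 1 \<and> \<Psi> \<subseteq> \<Psi>' \<longrightarrow> \<Psi>' = \<Psi>)"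

end

theory Submission
  imports Defs "HOL-Library.FuncSet"
begin


lemma rrefl_linear: "linear (rrefl a)"
  unfolding rrefl_def by (intro linearI) (auto simp: algebra_simps inner_add_left add_divide_distrib)

lemma rrefl_inner: assumes "a \<noteq> 0" shows "rrefl a u \<bullet> rrefl a v = u \<bullet> v"
  using assms unfolding rrefl_def
  by (simp add: algebra_simps inner_commute power2_eq_square)

lemma rrefl_invol: assumes "a \<noteq> 0" shows "rrefl a (rrefl a v) = v"
  using assms unfolding rrefl_def
  by (simp add: algebra_simps inner_commute)




lemma rs_nz: "root_system \<Phi> \<Longrightarrow> a \<in> \<Phi> \<Longrightarrow> a \<noteq> 0"
  unfolding root_system_def by auto

lemma weyl_props:
  assumes rs: "root_system \<Phi>" and w: "w \<in> weyl_group \<Phi>"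
  shows "linear w \<and> (\<forall>u v. w u \<bullet> w v = u \<bullet> v) \<and> w ` \<Phi> \<subseteq> \<Phi>"
  using w
proof induction
  case weyl_id
  have "linear (id::'a\<Rightarrow>'a)" by (rule linear_id)
  then show ?case by (simp add: id_def)
next
  case (weyl_step w a)
  have nz: "a \<noteq> 0" using rs weyl_step rs_nz by blast
  have "linear (rrefl a \<circ> w)" using weyl_step rrefl_linear linear_compose by blast
  moreover have "\<forall>u v. (rrefl a \<circ> w) u \<bullet> (rrefl a \<circ> w) v = u \<bullet> v"
    using weyl_step rrefl_inner[OF nz] by simp
  moreover have "(rrefl a \<circ> w) ` \<Phi> \<subseteq> \<Phi>"
    using weyl_step rs unfolding root_system_def by auto
  ultimately show ?case by blast
qed

lemma weyl_inj: assumes rs: "root_system \<Phi>" and w: "w \<in> weyl_group \<Phi>" shows "inj w"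
proof (rule injI)
  fix x y assume "w x = w y"
  have lin: "linear w" and ip: "\<And>u v. w u \<bullet> w v = u \<bullet> v" using weyl_props[OF rs w] by auto
  have "w (x - y) = 0" using \<open>w x = w y\<close> lin by (simp add: linear_diff)
  then have "(x - y) \<bullet> (x - y) = 0" using ip[of "x-y" "x-y"] by simp
  then show "x = y" by simp
qed

lemma weyl_perm: assumes rs: "root_system \<Phi>" and w: "w \<in> weyl_group \<Phi>" shows "w ` \<Phi> = \<Phi>"
proof -
  have f: "finite \<Phi>" using rs root_system_def by auto
  have sub: "w ` \<Phi> \<subseteq> \<Phi>" using weyl_props[OF rs w] by auto
  have "card (w ` \<Phi>) = card \<Phi>" using weyl_inj[OF rs w] by (simp add: card_image inj_on_subset)
  then show ?thesis using sub f by (simp add: card_subset_eq)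
qed

lemma weyl_right: assumes rs: "root_system \<Phi>" and w: "w \<in> weyl_group \<Phi>" and a: "a \<in> \<Phi>"
  shows "w \<circ> rrefl a \<in> weyl_group \<Phi>"
  using w
proof induction
  case weyl_id
  have "rrefl a \<circ> id \<in> weyl_group \<Phi>" using a weyl_group.intros by blast
  then show ?case by simp
next
  case (weyl_step w b)
  have "rrefl b \<circ> (w \<circ> rrefl a) \<in> weyl_group \<Phi>" using weyl_step weyl_group.weyl_step by blast
  then show ?case by (metis comp_assoc)
qed

lemma weyl_inv: assumes rs: "root_system \<Phi>" and w: "w \<in> weyl_group \<Phi>"
  shows "\<exists>v\<in>weyl_group \<Phi>. v \<circ> w = id"
  using w
proof induction
  case weyl_id then show ?case by (intro bexI[of _ id]) (auto intro: weyl_group.weyl_id)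
next
  case (weyl_step w a)
  then obtain v where v: "v \<in> weyl_group \<Phi>" "v \<circ> w = id" by blast
  have nz: "a \<noteq> 0" using rs weyl_step rs_nz by blast
  have "(v \<circ> rrefl a) \<circ> (rrefl a \<circ> w) = id"
    using v(2) rrefl_invol[OF nz] by (auto simp: fun_eq_iff comp_def)
  then show ?case using weyl_right[OF rs v(1) weyl_step(2)] by blast
qed




lemma base_span: assumes b: "is_base \<Phi> r \<alpha>" shows "span \<Phi> = span (\<alpha> ` {1..r})"
proof -
  have h1: "\<alpha> ` {1..r} \<subseteq> span \<Phi>" using b unfolding is_base_def by (auto intro: span_base)
  have h2: "\<Phi> \<subseteq> span (\<alpha> ` {1..r})"
  proof
    fix v assume "v \<in> \<Phi>"
    then obtain c where v: "v = (\<Sum>i=1..r. real_of_int (c i) *\<^sub>R \<alpha> i)" using b unfolding is_base_def by blast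
    have "(\<Sum>i=1..r. real_of_int (c i) *\<^sub>R \<alpha> i) \<in> span (\<alpha> ` {1..r})"
      by (rule span_sum, rule span_scale, rule span_base) simp
    then show "v \<in> span (\<alpha> ` {1..r})" using v by simp
  qed
  show ?thesis using span_eq[THEN iffD2, OF conjI[OF h2 h1]] .
qed

lemma base_card: assumes b: "is_base \<Phi> r \<alpha>" and J: "J \<subseteq> {1..r}"
  shows "dim (\<alpha> ` J) = card J"
proof -
  have ind: "independent (\<alpha> ` {1..r})" and inj: "inj_on \<alpha> {1..r}" using b unfolding is_base_def by auto
  have "independent (\<alpha> ` J)" using independent_mono[OF ind image_mono[OF J]] .
  then have "dim (\<alpha> ` J) = card (\<alpha> ` J)" by (rule dim_eq_card_independent)
  also have "\<dots> = card J" using card_image[OF inj_on_subset[OF inj J]] .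
  finally show ?thesis .
qed

lemma base_rank: assumes b: "is_base \<Phi> r \<alpha>" shows "rank \<Phi> = r"
proof -
  have "rank \<Phi> = dim (\<alpha> ` {1..r})" unfolding rank_def base_span[OF b] dim_span ..
  also have "\<dots> = r" using base_card[OF b, of "{1..r}"] by simp
  finally show ?thesis .
qed



lemma base_dual: assumes b: "is_base \<Phi> r \<alpha>" and i: "i \<in> {1..r}"
  shows "\<exists>x. x \<bullet> \<alpha> i > 0 \<and> (\<forall>k\<in>{1..r}-{i}. x \<bullet> \<alpha> k = 0)"
proof -
  let ?B = "\<alpha> ` ({1..r}-{i})"
  obtain p x where p: "p \<in> span ?B" and x: "\<And>u. u \<in> span ?B \<Longrightarrow> orthogonal x u" and e: "\<alpha> i = p + x"
    using orthogonal_subspace_decomp_exists by blast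
  have ind: "independent (\<alpha> ` {1..r})" and inj: "inj_on \<alpha> {1..r}" using b unfolding is_base_def by auto
  have eqB: "?B = \<alpha> ` {1..r} - {\<alpha> i}"
  proof
    show "?B \<subseteq> \<alpha> ` {1..r} - {\<alpha> i}" using inj i by (auto dest: inj_onD)
    show "\<alpha> ` {1..r} - {\<alpha> i} \<subseteq> ?B" by blast
  qed
  have "\<alpha> i \<in> \<alpha> ` {1..r}" using i by blast
  then have "\<alpha> i \<notin> span ?B" using ind unfolding eqB dependent_def by blast
  then have "x \<noteq> 0" using p e by auto
  have "x \<bullet> p = 0" using x[OF p] by (simp add: orthogonal_def)
  then have "x \<bullet> \<alpha> i = x \<bullet> x" using e by (simp add: inner_add_right)
  then have "x \<bullet> \<alpha> i > 0" using \<open>x \<noteq> 0\<close> by simp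
  moreover have "\<forall>k\<in>{1..r}-{i}. x \<bullet> \<alpha> k = 0"
  proof
    fix k assume "k \<in> {1..r}-{i}"
    then have "\<alpha> k \<in> span ?B" by (intro span_base) blast
    then show "x \<bullet> \<alpha> k = 0" using x by (simp add: orthogonal_def)
  qed
  ultimately show ?thesis by blast
qed

lemma base_rho: assumes b: "is_base \<Phi> r \<alpha>" shows "\<exists>\<rho>. \<forall>k\<in>{1..r}. \<rho> \<bullet> \<alpha> k > 0"
proof -
  have "\<forall>i\<in>{1..r}. \<exists>x. x \<bullet> \<alpha> i > 0 \<and> (\<forall>k\<in>{1..r}-{i}. x \<bullet> \<alpha> k = 0)"
    using base_dual[OF b] by blast
  from bchoice[OF this] obtain X where X: "\<forall>i\<in>{1..r}. X i \<bullet> \<alpha> i > 0 \<and> (\<forall>k\<in>{1..r}-{i}. X i \<bullet> \<alpha> k = 0)"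
    by blast
  have "\<forall>k\<in>{1..r}. (\<Sum>i=1..r. X i) \<bullet> \<alpha> k > 0"
  proof
    fix k assume k: "k \<in> {1..r}"
    have "(\<Sum>i=1..r. X i) \<bullet> \<alpha> k = (\<Sum>i\<in>{1..r}. X i \<bullet> \<alpha> k)" by (simp add: inner_sum_left)
    also have "\<dots> = X k \<bullet> \<alpha> k + (\<Sum>i\<in>{1..r}-{k}. X i \<bullet> \<alpha> k)"
      using sum.remove[of "{1..r}" k "\<lambda>i. X i \<bullet> \<alpha> k"] k by simp
    also have "(\<Sum>i\<in>{1..r}-{k}. X i \<bullet> \<alpha> k) = 0"
      using X k by (intro sum.neutral) auto
    finally show "(\<Sum>i=1..r. X i) \<bullet> \<alpha> k > 0" using X k by simp
  qed
  then show ?thesis by blast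
qed

lemma hyper_closed: assumes rs: "root_system \<Phi>"
  shows "closed_subsystem \<Phi> (\<Phi> \<inter> {v. v \<bullet> m = 0})"
proof -
  let ?P = "\<Phi> \<inter> {v. v \<bullet> m = 0}"
  have f: "finite \<Phi>" "0 \<notin> \<Phi>" and rf: "\<forall>a\<in>\<Phi>. \<forall>b\<in>\<Phi>. rrefl a b \<in> \<Phi>"
    and ci: "\<forall>a\<in>\<Phi>. \<forall>b\<in>\<Phi>. cartan_int b a \<in> \<int>"
    and rd: "\<forall>a\<in>\<Phi>. \<forall>c::real. c *\<^sub>R a \<in> \<Phi> \<longrightarrow> c = 1 \<or> c = -1"
    using rs unfolding root_system_def by auto
  have "\<forall>a\<in>?P. \<forall>b\<in>?P. rrefl a b \<in> ?P"
  proof (intro ballI)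
    fix a b assume a: "a \<in> ?P" and b: "b \<in> ?P"
    have "rrefl a b \<bullet> m = 0" using a b unfolding rrefl_def by (simp add: inner_diff_left)
    then show "rrefl a b \<in> ?P" using rf a b by simp
  qed
  then have "root_system ?P" using f ci rd unfolding root_system_def by auto
  moreover have "\<forall>l\<in>?P. \<forall>k\<in>?P. l + k \<in> \<Phi> \<longrightarrow> l + k \<in> ?P" by (simp add: inner_add_left)
  ultimately show ?thesis unfolding closed_subsystem_def root_subsystem_def by auto
qed




lemma int_span_iff: "v \<in> int_span S \<longleftrightarrow> (\<exists>T c. finite T \<and> T \<subseteq> S \<and> v = (\<Sum>u\<in>T. real_of_int (c u) *\<^sub>R u))"
  unfolding int_span_def mem_Collect_eq by (intro iff_exI) auto

lemma int_span_sub: "int_span S \<subseteq> span S"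
proof
  fix x assume "x \<in> int_span S"
  then obtain T c where T: "finite T" "T \<subseteq> S" and x: "x = (\<Sum>v\<in>T. real_of_int (c v) *\<^sub>R v)"
    unfolding int_span_iff by blast
  have "(\<Sum>v\<in>T. real_of_int (c v) *\<^sub>R v) \<in> span S"
    by (rule span_sum, rule span_scale, rule span_base) (use T in blast)
  then show "x \<in> span S" unfolding x .
qed

lemma int_span_base: "x \<in> int_span S" if "x \<in> S"
proof -
  show ?thesis unfolding int_span_iff
    by (rule exI[of _ "{x}"], rule exI[of _ "\<lambda>_. 1::int"]) (use that in simp)
qed

lemma int_span_perp: assumes "\<forall>s\<in>S. s \<bullet> y = 0" "v \<in> int_span S" shows "v \<bullet> y = 0"
proof -
  obtain T c where T: "finite T" "T \<subseteq> S" and x: "v = (\<Sum>u\<in>T. real_of_int (c u) *\<^sub>R u)"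
    using assms(2) unfolding int_span_iff by blast
  have "v \<bullet> y = (\<Sum>u\<in>T. real_of_int (c u) * (u \<bullet> y))" unfolding x inner_sum_left by simp
  also have "\<dots> = 0" using T assms(1) by (intro sum.neutral) auto
  finally show ?thesis .
qed

lemma slice_rank: assumes b: "is_base \<Phi> r \<alpha>" and J: "J \<subseteq> {1..r}"
  shows "rank (\<Phi> \<inter> int_span (\<alpha> ` J)) = card J"
proof -
  have "\<alpha> ` J \<subseteq> \<Phi> \<inter> int_span (\<alpha> ` J)"
  proof
    fix x assume x: "x \<in> \<alpha> ` J"
    then have "x \<in> \<Phi>" using b J unfolding is_base_def by auto
    then show "x \<in> \<Phi> \<inter> int_span (\<alpha> ` J)" using int_span_base[OF x] by simp
  qed
  then have h1: "\<alpha> ` J \<subseteq> span (\<Phi> \<inter> int_span (\<alpha> ` J))" using span_superset by (rule subset_trans)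
  have h2: "\<Phi> \<inter> int_span (\<alpha> ` J) \<subseteq> span (\<alpha> ` J)" using int_span_sub by (rule subset_trans[rotated]) simp
  have "span (\<Phi> \<inter> int_span (\<alpha> ` J)) = span (\<alpha> ` J)"
    using span_eq[THEN iffD2, OF conjI[OF h2 h1]] .
  then show ?thesis unfolding rank_def using base_card[OF b J] by simp
qed




lemma sum_zero_terms:
  fixes f :: "nat \<Rightarrow> real"
  assumes "finite A" "(\<forall>i\<in>A. f i \<ge> 0) \<or> (\<forall>i\<in>A. f i \<le> 0)" "sum f A = 0"
  shows "\<forall>i\<in>A. f i = 0"
  using assms(2)
proof
  assume h: "\<forall>i\<in>A. f i \<ge> 0"
  have "sum f A = 0 \<longleftrightarrow> (\<forall>i\<in>A. f i = 0)" by (rule sum_nonneg_eq_0_iff[OF assms(1)]) (use h in auto)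
  then show ?thesis using assms(3) by simp
next
  assume h: "\<forall>i\<in>A. f i \<le> 0"
  have s: "sum (\<lambda>i. - f i) A = 0" using assms(3) by (simp add: sum_negf)
  have "sum (\<lambda>i. - f i) A = 0 \<longleftrightarrow> (\<forall>i\<in>A. - f i = 0)" by (rule sum_nonneg_eq_0_iff[OF assms(1)]) (use h in auto)
  then show ?thesis using s by simp
qed

lemma dominant_slice:
  assumes b: "is_base \<Phi> r \<alpha>" and dom: "\<forall>k\<in>{1..r}. y \<bullet> \<alpha> k \<ge> 0"
  shows "\<Phi> \<inter> {v. v \<bullet> y = 0} = \<Phi> \<inter> int_span (\<alpha> ` {k\<in>{1..r}. y \<bullet> \<alpha> k = 0})"
proof
  let ?J = "{k\<in>{1..r}. y \<bullet> \<alpha> k = 0}"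
  show "\<Phi> \<inter> int_span (\<alpha> ` ?J) \<subseteq> \<Phi> \<inter> {v. v \<bullet> y = 0}"
  proof
    fix v assume v: "v \<in> \<Phi> \<inter> int_span (\<alpha> ` ?J)"
    have "\<forall>s\<in>\<alpha> ` ?J. s \<bullet> y = 0" by (auto simp: inner_commute)
    then have "v \<bullet> y = 0" using int_span_perp v by blast
    then show "v \<in> \<Phi> \<inter> {v. v \<bullet> y = 0}" using v by simp
  qed
  show "\<Phi> \<inter> {v. v \<bullet> y = 0} \<subseteq> \<Phi> \<inter> int_span (\<alpha> ` ?J)"
  proof
    fix v assume v: "v \<in> \<Phi> \<inter> {v. v \<bullet> y = 0}"
    then obtain c where c: "v = (\<Sum>i=1..r. real_of_int (c i) *\<^sub>R \<alpha> i)"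
      and sg: "(\<forall>i\<in>{1..r}. c i \<ge> 0) \<or> (\<forall>i\<in>{1..r}. c i \<le> 0)"
      using b unfolding is_base_def by blast
    have "0 = v \<bullet> y" using v by simp
    also have "\<dots> = (\<Sum>i=1..r. real_of_int (c i) * (y \<bullet> \<alpha> i))" 
      unfolding c inner_sum_left by (rule sum.cong) (auto simp: inner_commute)
    finally have s0: "(\<Sum>i=1..r. real_of_int (c i) * (y \<bullet> \<alpha> i)) = 0" by simp
    have sg2: "(\<forall>i\<in>{1..r}. real_of_int (c i) * (y \<bullet> \<alpha> i) \<ge> 0) \<or> (\<forall>i\<in>{1..r}. real_of_int (c i) * (y \<bullet> \<alpha> i) \<le> 0)"
      using sg dom by (auto simp: mult_nonpos_nonneg)
    have z: "\<forall>i\<in>{1..r}. real_of_int (c i) * (y \<bullet> \<alpha> i) = 0"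
      by (rule sum_zero_terms[OF _ sg2 s0]) simp
    have "v = (\<Sum>i\<in>?J. real_of_int (c i) *\<^sub>R \<alpha> i)"
      unfolding c by (rule sum.mono_neutral_right) (use z in auto)
    also have "\<dots> = (\<Sum>u\<in>\<alpha> ` ?J. real_of_int (c (inv_into ?J \<alpha> u)) *\<^sub>R u)"
    proof -
      have inj0: "inj_on \<alpha> {1..r}" using b unfolding is_base_def by simp
      have inj: "inj_on \<alpha> ?J" by (rule inj_on_subset[OF inj0]) blast
      show ?thesis unfolding sum.reindex[OF inj] o_def
      proof (rule sum.cong[OF refl])
        fix x assume "x \<in> ?J"
        then have "inv_into ?J \<alpha> (\<alpha> x) = x" by (rule inv_into_f_f[OF inj])
        then show "real_of_int (c x) *\<^sub>R \<alpha> x = real_of_int (c (inv_into ?J \<alpha> (\<alpha> x))) *\<^sub>R \<alpha> x" by simp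
      qed
    qed
    finally have ve: "v = (\<Sum>u\<in>\<alpha> ` ?J. real_of_int (c (inv_into ?J \<alpha> u)) *\<^sub>R u)" .
    have "v \<in> int_span (\<alpha> ` ?J)" unfolding int_span_iff
    proof (rule exI[of _ "\<alpha> ` ?J"], rule exI[of _ "\<lambda>u. c (inv_into ?J \<alpha> u)"], intro conjI)
      show "finite (\<alpha> ` ?J)" by simp
      show "\<alpha> ` ?J \<subseteq> \<alpha> ` ?J" by (rule subset_refl)
      show "v = (\<Sum>u\<in>\<alpha> ` ?J. real_of_int (c (inv_into ?J \<alpha> u)) *\<^sub>R u)" by (rule ve)
    qed
    then show "v \<in> \<Phi> \<inter> int_span (\<alpha> ` ?J)" using v by simp
  qed
qed




lemma weyl_span: assumes rs: "root_system \<Phi>" and w: "w \<in> weyl_group \<Phi>" and n: "n \<in> span \<Phi>"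
  shows "w n \<in> span \<Phi>"
proof -
  have lin: "linear w" using weyl_props[OF rs w] by auto
  have "w n \<in> span (w ` \<Phi>)" using n span_linear_image[OF lin] by auto
  then show ?thesis using weyl_perm[OF rs w] by simp
qed

lemma orbit_finite: assumes rs: "root_system \<Phi>" and n: "n \<in> span \<Phi>"
  shows "finite ((\<lambda>w. w n) ` weyl_group \<Phi>)"
proof -
  have fP: "finite \<Phi>" using rs root_system_def by auto
  let ?F = "(\<lambda>\<gamma>. n \<bullet> \<gamma>) ` \<Phi>"
  let ?S = "{y \<in> span \<Phi>. \<forall>\<beta>\<in>\<Phi>. y \<bullet> \<beta> \<in> ?F}"
  let ?g = "\<lambda>y. restrict (\<lambda>\<beta>. y \<bullet> \<beta>) \<Phi>"
  have sub: "(\<lambda>w. w n) ` weyl_group \<Phi> \<subseteq> ?S"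
  proof
    fix y assume "y \<in> (\<lambda>w. w n) ` weyl_group \<Phi>"
    then obtain w where w: "w \<in> weyl_group \<Phi>" and y: "y = w n" by blast
    have ip: "\<And>u v. w u \<bullet> w v = u \<bullet> v" using weyl_props[OF rs w] by auto
    have "\<forall>\<beta>\<in>\<Phi>. y \<bullet> \<beta> \<in> ?F"
    proof
      fix \<beta> assume "\<beta> \<in> \<Phi>"
      then obtain \<gamma> where "\<gamma> \<in> \<Phi>" "\<beta> = w \<gamma>" using weyl_perm[OF rs w] by blast
      then show "y \<bullet> \<beta> \<in> ?F" using y ip by auto
    qed
    then show "y \<in> ?S" using weyl_span[OF rs w n] y by simp
  qed
  have "?g ` ?S \<subseteq> PiE \<Phi> (\<lambda>_. ?F)" by auto
  moreover have "finite (PiE \<Phi> (\<lambda>_. ?F))" using fP by (intro finite_PiE) auto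
  ultimately have "finite (?g ` ?S)" by (rule finite_subset)
  moreover have "inj_on ?g ?S"
  proof (rule inj_onI)
    fix y z assume y: "y \<in> ?S" and z: "z \<in> ?S" and e: "?g y = ?g z"
    have "\<And>\<beta>. \<beta> \<in> \<Phi> \<Longrightarrow> orthogonal (y - z) \<beta>"
    proof -
      fix \<beta> assume "\<beta> \<in> \<Phi>"
      then have "?g y \<beta> = ?g z \<beta>" using e by simp
      then have "y \<bullet> \<beta> = z \<bullet> \<beta>" using \<open>\<beta> \<in> \<Phi>\<close> by simp
      then show "orthogonal (y - z) \<beta>" by (simp add: orthogonal_def inner_diff_left)
    qed
    moreover have "y - z \<in> span \<Phi>" using y z by (simp add: span_diff)
    ultimately have "orthogonal (y - z) (y - z)" using orthogonal_to_span by blast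
    then show "y = z" by (simp add: orthogonal_def)
  qed
  ultimately have "finite ?S" by (rule finite_imageD)
  then show ?thesis using sub finite_subset by blast
qed

lemma dominant_conj: assumes rs: "root_system \<Phi>" and b: "is_base \<Phi> r \<alpha>" and n: "n \<in> span \<Phi>"
  shows "\<exists>w\<in>weyl_group \<Phi>. \<forall>k\<in>{1..r}. w n \<bullet> \<alpha> k \<ge> 0"
proof -
  obtain \<rho> where \<rho>: "\<forall>k\<in>{1..r}. \<rho> \<bullet> \<alpha> k > 0" using base_rho[OF b] by blast
  let ?O = "(\<lambda>w. w n) ` weyl_group \<Phi>"
  have fO: "finite ?O" by (rule orbit_finite[OF rs n])
  have "id n \<in> ?O" using weyl_group.weyl_id by (rule imageI)
  then have neO: "?O \<noteq> {}" by auto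
  let ?M = "Max ((\<lambda>z. z \<bullet> \<rho>) ` ?O)"
  have fO2: "finite ((\<lambda>z. z \<bullet> \<rho>) ` ?O)" using fO by (rule finite_imageI)
  have "?M \<in> (\<lambda>z. z \<bullet> \<rho>) ` ?O" using fO2 by (rule Max_in) (use neO in simp)
  then obtain y where yM0: "?M = y \<bullet> \<rho>" and yO: "y \<in> ?O" by (rule imageE)
  have yM: "y \<bullet> \<rho> = ?M" using yM0 by (rule sym)
  have ymax: "\<forall>z\<in>?O. z \<bullet> \<rho> \<le> y \<bullet> \<rho>"
  proof
    fix z assume "z \<in> ?O"
    then have "z \<bullet> \<rho> \<in> (\<lambda>z. z \<bullet> \<rho>) ` ?O" by (rule imageI)
    then show "z \<bullet> \<rho> \<le> y \<bullet> \<rho>" unfolding yM by (rule Max_ge[OF fO2])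
  qed
  from yO obtain w where yw: "y = w n" and w: "w \<in> weyl_group \<Phi>" by (rule imageE)
  have "\<forall>k\<in>{1..r}. y \<bullet> \<alpha> k \<ge> 0"
  proof (rule ccontr)
    assume "\<not> ?thesis"
    then obtain k where k: "k \<in> {1..r}" and neg0: "\<not> y \<bullet> \<alpha> k \<ge> 0" by blast
    have neg: "y \<bullet> \<alpha> k < 0" using neg0 by simp
    have ak: "\<alpha> k \<in> \<Phi>" using b k unfolding is_base_def by auto
    have nz: "\<alpha> k \<noteq> 0" using rs_nz[OF rs ak] .
    have w2: "rrefl (\<alpha> k) \<circ> w \<in> weyl_group \<Phi>" using w ak weyl_group.weyl_step by blast
    have "(rrefl (\<alpha> k) \<circ> w) n \<in> ?O" using w2 by (rule imageI)
    then have "rrefl (\<alpha> k) y \<in> ?O" using yw by simp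
    then have le: "rrefl (\<alpha> k) y \<bullet> \<rho> \<le> y \<bullet> \<rho>" using ymax by blast
    have pos: "\<alpha> k \<bullet> \<alpha> k > 0" using nz by simp
    have "2 * (y \<bullet> \<alpha> k) < 0" using neg by simp
    then have c: "(2 * (y \<bullet> \<alpha> k)) / (\<alpha> k \<bullet> \<alpha> k) < 0" using pos by (rule divide_neg_pos)
    have "rrefl (\<alpha> k) y \<bullet> \<rho> = y \<bullet> \<rho> - ((2 * (y \<bullet> \<alpha> k)) / (\<alpha> k \<bullet> \<alpha> k)) * (\<alpha> k \<bullet> \<rho>)"
      unfolding rrefl_def by (simp add: inner_diff_left)
    moreover have "\<alpha> k \<bullet> \<rho> > 0" using \<rho> k by (simp add: inner_commute)
    moreover have "((2 * (y \<bullet> \<alpha> k)) / (\<alpha> k \<bullet> \<alpha> k)) * (\<alpha> k \<bullet> \<rho>) < 0"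
      using c \<open>\<alpha> k \<bullet> \<rho> > 0\<close> by (rule mult_neg_pos)
    ultimately have "rrefl (\<alpha> k) y \<bullet> \<rho> > y \<bullet> \<rho>" by linarith
    then show False using le by simp
  qed
  then show ?thesis using w yw by blast
qed




lemma weyl_slice: assumes rs: "root_system \<Phi>" and w: "w \<in> weyl_group \<Phi>"
  shows "w ` (\<Phi> \<inter> {v. v \<bullet> n = 0}) = \<Phi> \<inter> {v. v \<bullet> w n = 0}"
proof -
  have ip: "\<And>u v. w u \<bullet> w v = u \<bullet> v" using weyl_props[OF rs w] by auto
  have P: "w ` \<Phi> = \<Phi>" by (rule weyl_perm[OF rs w])
  show ?thesis
  proof
    show "w ` (\<Phi> \<inter> {v. v \<bullet> n = 0}) \<subseteq> \<Phi> \<inter> {v. v \<bullet> w n = 0}"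
    proof
      fix u assume "u \<in> w ` (\<Phi> \<inter> {v. v \<bullet> n = 0})"
      then obtain v where u: "u = w v" and v: "v \<in> \<Phi> \<inter> {v. v \<bullet> n = 0}" by (rule imageE)
      have "w v \<in> \<Phi>" using v P by blast
      moreover have "w v \<bullet> w n = 0" using v ip by simp
      ultimately show "u \<in> \<Phi> \<inter> {v. v \<bullet> w n = 0}" using u by simp
    qed
    show "\<Phi> \<inter> {v. v \<bullet> w n = 0} \<subseteq> w ` (\<Phi> \<inter> {v. v \<bullet> n = 0})"
    proof
      fix u assume u: "u \<in> \<Phi> \<inter> {v. v \<bullet> w n = 0}"
      then have "u \<in> w ` \<Phi>" using P by simp
      then obtain v where uv: "u = w v" and v: "v \<in> \<Phi>" by (rule imageE)
      have "v \<bullet> n = 0" using u uv ip by simp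
      then have "v \<in> \<Phi> \<inter> {v. v \<bullet> n = 0}" using v by simp
      then show "u \<in> w ` (\<Phi> \<inter> {v. v \<bullet> n = 0})" using uv by (rule rev_image_eqI) 
    qed
  qed
qed

lemma weyl_rank: assumes rs: "root_system \<Phi>" and w: "w \<in> weyl_group \<Phi>"
  shows "rank (w ` S) = rank S"
proof -
  have lin: "linear w" using weyl_props[OF rs w] by auto
  have "inj_on w (span S)" using weyl_inj[OF rs w] by (rule inj_on_subset) simp
  then have "dim (w ` S) = dim S" by (rule dim_image_eq[OF lin])
  then show ?thesis unfolding rank_def dim_span .
qed




lemma span_orth: assumes "\<forall>u\<in>S. u \<bullet> x = 0" "a \<in> span S" shows "a \<bullet> x = 0"
proof -
  have "orthogonal x a" using assms(2) by (rule orthogonal_to_span) (use assms(1) in \<open>simp add: orthogonal_def inner_commute\<close>)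
  then show ?thesis by (simp add: orthogonal_def inner_commute)
qed

lemma part1:
  assumes rs: "root_system \<Phi>" and b: "is_base \<Phi> r \<alpha>" and i: "i \<in> {1..r}"
  shows "good_subsystem \<Phi> (\<Phi> \<inter> int_span (\<alpha> ` ({1..r} - {i})))"
proof -
  let ?P = "\<Phi> \<inter> int_span (\<alpha> ` ({1..r} - {i}))"
  obtain x where xi: "x \<bullet> \<alpha> i > 0" and xk: "\<forall>k\<in>{1..r}-{i}. x \<bullet> \<alpha> k = 0"
    using base_dual[OF b i] by blast
  have dom: "\<forall>k\<in>{1..r}. x \<bullet> \<alpha> k \<ge> 0" using xi xk by (metis DiffI eq_iff less_imp_le singletonD)
  have J: "{k\<in>{1..r}. x \<bullet> \<alpha> k = 0} = {1..r} - {i}" using xi xk by auto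
  have eq: "\<Phi> \<inter> {v. v \<bullet> x = 0} = ?P" using dominant_slice[OF b dom] unfolding J .
  have cl: "closed_subsystem \<Phi> ?P" using hyper_closed[OF rs, of x] unfolding eq .
  have rk: "rank ?P = rank \<Phi> - 1"
    using slice_rank[OF b, of "{1..r} - {i}"] i base_rank[OF b] by simp
  have mx: "\<forall>\<Psi>'. closed_subsystem \<Phi> \<Psi>' \<and> rank \<Psi>' = rank \<Phi> - 1 \<and> ?P \<subseteq> \<Psi>' \<longrightarrow> \<Psi>' = ?P"
  proof (intro allI impI)
    fix Q assume h: "closed_subsystem \<Phi> Q \<and> rank Q = rank \<Phi> - 1 \<and> ?P \<subseteq> Q"
    have QP: "Q \<subseteq> \<Phi>" using h unfolding closed_subsystem_def root_subsystem_def by simp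
    have "span ?P \<subseteq> span Q" using h by (simp add: span_mono)
    moreover have "dim (span Q) \<le> dim (span ?P)" using h rk unfolding rank_def by simp
    ultimately have spe: "span ?P = span Q" by (rule subspace_dim_equal[OF subspace_span subspace_span])
    have "\<forall>u\<in>?P. u \<bullet> x = 0" using eq by blast
    then have "\<forall>a\<in>span Q. a \<bullet> x = 0" unfolding spe[symmetric] using span_orth by blast
    then have "Q \<subseteq> \<Phi> \<inter> {v. v \<bullet> x = 0}" using QP span_base by blast
    then have "Q \<subseteq> ?P" unfolding eq .
    then show "Q = ?P" using h by blast
  qed
  show ?thesis unfolding good_subsystem_def using cl rk mx by blast
qed




lemma part2:
  assumes rs: "root_system \<Phi>" and b: "is_base \<Phi> r \<alpha>" and r1: "r \<ge> 1"
    and g: "good_subsystem \<Phi> \<Psi>"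
  shows "\<exists>i\<in>{1..r}. \<exists>w\<in>weyl_group \<Phi>. \<Psi> = w ` (\<Phi> \<inter> int_span (\<alpha> ` ({1..r} - {i})))"
proof -
  have rP: "rank \<Phi> = r" by (rule base_rank[OF b])
  have clP: "closed_subsystem \<Phi> \<Psi>" and rkP: "rank \<Psi> = r - 1"
    and mx: "\<forall>\<Psi>'. closed_subsystem \<Phi> \<Psi>' \<and> rank \<Psi>' = r - 1 \<and> \<Psi> \<subseteq> \<Psi>' \<longrightarrow> \<Psi>' = \<Psi>"
    using g rP unfolding good_subsystem_def by auto
  have PsiP: "\<Psi> \<subseteq> \<Phi>" using clP unfolding closed_subsystem_def root_subsystem_def by simp
  have "\<exists>k\<in>{1..r}. \<alpha> k \<notin> span \<Psi>"
  proof (rule ccontr)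
    assume "\<not> ?thesis"
    then have "\<alpha> ` {1..r} \<subseteq> span \<Psi>" by auto
    then have "dim (\<alpha> ` {1..r}) \<le> dim (span \<Psi>)" by (rule dim_subset)
    then have "r \<le> r - 1" using base_card[OF b, of "{1..r}"] rkP unfolding rank_def by simp
    then show False using r1 by simp
  qed
  then obtain k where k: "k \<in> {1..r}" and nk: "\<alpha> k \<notin> span \<Psi>" by blast
  obtain p n where p: "p \<in> span \<Psi>" and on: "\<And>u. u \<in> span \<Psi> \<Longrightarrow> orthogonal n u" and e: "\<alpha> k = p + n"
    using orthogonal_subspace_decomp_exists by blast
  have "n \<noteq> 0" using nk p e by auto
  have ak: "\<alpha> k \<in> \<Phi>" using b k unfolding is_base_def by simp
  have "n = \<alpha> k - p" using e by simp
  moreover have "\<alpha> k \<in> span \<Phi>" using ak by (rule span_base)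
  moreover have "p \<in> span \<Phi>" using p span_mono[OF PsiP] by blast
  ultimately have nS: "n \<in> span \<Phi>" by (simp add: span_diff)
  let ?H = "\<Phi> \<inter> {v. v \<bullet> n = 0}"
  have PsiH: "\<Psi> \<subseteq> ?H"
  proof
    fix v assume v: "v \<in> \<Psi>"
    then have "orthogonal n v" using on span_base by blast
    then show "v \<in> ?H" using v PsiP by (auto simp: orthogonal_def inner_commute)
  qed
  have clH: "closed_subsystem \<Phi> ?H" by (rule hyper_closed[OF rs])
  have "dim (span \<Psi>) \<le> dim (span ?H)" using PsiH by (intro dim_subset span_mono)
  then have ge: "rank ?H \<ge> r - 1" using rkP unfolding rank_def by simp
  have "n \<notin> span ?H"
  proof
    assume "n \<in> span ?H"
    then have "n \<bullet> n = 0" by (rule span_orth[rotated]) simp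
    then show False using \<open>n \<noteq> 0\<close> by simp
  qed
  then have "span ?H \<subset> span \<Phi>" using nS span_mono[of ?H \<Phi>] by blast
  then have "dim ?H < dim \<Phi>" by (rule dim_psubset)
  then have "rank ?H < r" using rP unfolding rank_def dim_span by simp
  then have rkH: "rank ?H = r - 1" using ge by simp
  have HP: "?H = \<Psi>" using mx clH rkH PsiH by blast
  obtain w where w: "w \<in> weyl_group \<Phi>" and dom: "\<forall>k\<in>{1..r}. w n \<bullet> \<alpha> k \<ge> 0"
    using dominant_conj[OF rs b nS] by blast
  let ?J = "{k\<in>{1..r}. w n \<bullet> \<alpha> k = 0}"
  have wPsi: "w ` \<Psi> = \<Phi> \<inter> int_span (\<alpha> ` ?J)"
    using weyl_slice[OF rs w, of n] dominant_slice[OF b dom] HP by simp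
  have "rank (w ` \<Psi>) = r - 1" using weyl_rank[OF rs w] rkP by simp
  moreover have "rank (\<Phi> \<inter> int_span (\<alpha> ` ?J)) = card ?J" by (rule slice_rank[OF b]) auto
  ultimately have cJ: "card ?J = r - 1" using wPsi by simp
  have "?J \<noteq> {1..r}" using cJ r1 by auto
  then obtain i where i: "i \<in> {1..r}" "i \<notin> ?J" by blast
  have "?J \<subseteq> {1..r} - {i}" using i by blast
  moreover have "card ({1..r} - {i}) = card ?J" using i cJ by simp
  ultimately have Ji: "?J = {1..r} - {i}" by (intro card_subset_eq) auto
  obtain v where v: "v \<in> weyl_group \<Phi>" and vw: "v \<circ> w = id" using weyl_inv[OF rs w] by blast
  have "\<Psi> = v ` (w ` \<Psi>)"
  proof -
    have "v ` (w ` \<Psi>) = (v \<circ> w) ` \<Psi>" by (simp add: image_comp)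
    then show ?thesis using vw by simp
  qed
  then have "\<Psi> = v ` (\<Phi> \<inter> int_span (\<alpha> ` ({1..r} - {i})))" using wPsi Ji by simp
  then show ?thesis using i v by blast
qed



theorem theoremA:
  fixes \<Phi> :: "'a::euclidean_space set" and \<alpha> :: "nat \<Rightarrow> 'a" and r :: nat
  assumes "root_system \<Phi>"
    and "is_base \<Phi> r \<alpha>"
    and "classical_type r \<alpha>"
  shows "(\<forall>i\<in>{1..r}. good_subsystem \<Phi> (\<Phi> \<inter> int_span (\<alpha> ` ({1..r} - {i}))))
       \<and> (\<forall>\<Psi>. good_subsystem \<Phi> \<Psi> \<longrightarrow>
            (\<exists>i\<in>{1..r}. \<exists>w\<in>weyl_group \<Phi>. \<Psi> = w ` (\<Phi> \<inter> int_span (\<alpha> ` ({1..r} - {i})))))"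
proof -
  have r1: "r \<ge> 1" using assms(3) unfolding classical_type_def by auto
  show ?thesis using part1[OF assms(1,2)] part2[OF assms(1,2) r1] by blast
qed

end
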